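(* A sequence $X\in2^\omega$ is computable if and only if there exists a left-c.e. semi-measure $\rho$ such that $X$ is an atom of $\overline\rho$, i.e., $\lim_n\overline\rho(X{\upharpoonright}n)>0$.
   Context: $2^{<\omega}$ is the set of finite binary strings, $\varepsilon$ the empty string, $X{\upharpoonright}n$ the first $n$ bits of $X$. A semi-measure is $\rho:2^{<\omega}\to[0,1]$ with $\rho(\varepsilon)=1$ and $\rho(\sigma)\ge\rho(\sigma0)+\rho(\sigma1)$; left-c.e. means its values are uniformly approximable from below by computable non-decreasing rational sequences. $\overline\rho(\sigma)=\inf_{n\ge|\sigma|}\sum_{\tau\succeq\sigma,\,|\tau|=n}\rho(\tau)$, which defines a measure on $2^\omega$; $X$ is an atom of $\overline\rho$ if $\overline\rho(\{X\})>0$. *)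

theory Defs
  imports Complex_Main
begin

datatype recf = Z | S | Proj nat | Comp recf "recf list" | Prec recf recf | Mn recf

inductive eval :: "recf \<Rightarrow> nat list \<Rightarrow> nat \<Rightarrow> bool" where
  eval_Z: "eval Z xs 0"
| eval_S: "eval S (x # xs) (Suc x)"
| eval_Proj: "i < length xs \<Longrightarrow> eval (Proj i) xs (xs ! i)"
| eval_Comp: "list_all2 (\<lambda>g y. eval g xs y) gs ys \<Longrightarrow> eval f ys z \<Longrightarrow> eval (Comp f gs) xs z"
| eval_Prec0: "eval g xs y \<Longrightarrow> eval (Prec g h) (0 # xs) y"
| eval_PrecS: "eval (Prec g h) (n # xs) y \<Longrightarrow> eval h (n # y # xs) z \<Longrightarrow>
                 eval (Prec g h) (Suc n # xs) z"
| eval_Mn: "eval f (y # xs) 0 \<Longrightarrow> (\<forall>z<y. \<exists>v. v > 0 \<and> eval f (z # xs) v) \<Longrightarrow>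
              eval (Mn f) xs y"

definition computable1 :: "(nat \<Rightarrow> nat) \<Rightarrow> bool" where
  "computable1 h \<longleftrightarrow> (\<exists>f. \<forall>n. eval f [n] (h n))"

definition computable2 :: "(nat \<Rightarrow> nat \<Rightarrow> nat) \<Rightarrow> bool" where
  "computable2 h \<longleftrightarrow> (\<exists>f. \<forall>m n. eval f [m, n] (h m n))"

definition computable_seq :: "(nat \<Rightarrow> bool) \<Rightarrow> bool" where
  "computable_seq X \<longleftrightarrow> computable1 (\<lambda>n. if X n then 1 else 0)"

text \<open>Standard bijective coding of finite binary strings by natural numbers.\<close>
fun code_str :: "bool list \<Rightarrow> nat" where
  "code_str [] = 0"
| "code_str (b # bs) = 2 * code_str bs + (if b then 2 else 1)"

definition restr :: "(nat \<Rightarrow> bool) \<Rightarrow> nat \<Rightarrow> bool list" where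
  "restr X n = map X [0..<n]"

definition semimeasure :: "(bool list \<Rightarrow> real) \<Rightarrow> bool" where
  "semimeasure \<rho> \<longleftrightarrow> (\<forall>\<sigma>. 0 \<le> \<rho> \<sigma> \<and> \<rho> \<sigma> \<le> 1) \<and> \<rho> [] = 1 \<and>
     (\<forall>\<sigma>. \<rho> \<sigma> \<ge> \<rho> (\<sigma> @ [False]) + \<rho> (\<sigma> @ [True]))"

definition left_ce :: "(bool list \<Rightarrow> real) \<Rightarrow> bool" where
  "left_ce \<rho> \<longleftrightarrow> (\<exists>num den. computable2 num \<and> computable2 den \<and>
     (\<forall>\<sigma>. let q = (\<lambda>s. real (num (code_str \<sigma>) s) / real (den (code_str \<sigma>) s + 1)) in
        mono q \<and> q \<longlonglongrightarrow> \<rho> \<sigma>))"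

definition rho_bar :: "(bool list \<Rightarrow> real) \<Rightarrow> bool list \<Rightarrow> real" where
  "rho_bar \<rho> \<sigma> = (INF n\<in>{length \<sigma>..}.
      \<Sum>\<tau>\<in>{\<tau>. length \<tau> = n \<and> take (length \<sigma>) \<tau> = \<sigma>}. \<rho> \<tau>)"

end

theory Submission
  imports Defs
begin


definition rf :: "nat \<Rightarrow> (nat list \<Rightarrow> nat) \<Rightarrow> bool" where
  "rf n h \<longleftrightarrow> (\<exists>f. \<forall>xs. length xs = n \<longrightarrow> eval f xs (h xs))"

lemma rf_cong: "rf n f \<Longrightarrow> (\<And>xs. length xs = n \<Longrightarrow> f xs = g xs) \<Longrightarrow> rf n g"
  unfolding rf_def by metis

lemma rf_Z: "rf n (\<lambda>_. 0)"
  unfolding rf_def by (auto intro: eval_Z)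

lemma rf_S: "rf 1 (\<lambda>xs. Suc (xs!0))"
  unfolding rf_def
  apply (rule exI[of _ S])
  apply clarify
  apply (case_tac xs)
   apply (auto intro: eval_S)
  done

lemma rf_Proj: "i < n \<Longrightarrow> rf n (\<lambda>xs. xs!i)"
  unfolding rf_def by (auto intro: eval_Proj)

lemma ex_list_all2: "(\<And>h. h \<in> set hs \<Longrightarrow> \<exists>f. P f h) \<Longrightarrow> \<exists>fs. list_all2 P fs hs"
proof (induction hs)
  case Nil then show ?case by auto
next
  case (Cons a hs)
  then obtain f where "P f a" by auto
  moreover from Cons obtain fs where "list_all2 P fs hs" by auto
  ultimately show ?case by (intro exI[of _ "f # fs"]) auto
qed

lemma rf_comp:
  assumes "rf (length hs) g" "\<And>h. h \<in> set hs \<Longrightarrow> rf n h"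
  shows "rf n (\<lambda>xs. g (map (\<lambda>h. h xs) hs))"
proof -
  obtain fg where fg: "\<forall>ys. length ys = length hs \<longrightarrow> eval fg ys (g ys)"
    using assms(1) unfolding rf_def by auto
  obtain fs where fs: "list_all2 (\<lambda>f h. \<forall>xs. length xs = n \<longrightarrow> eval f xs (h xs)) fs hs"
    using ex_list_all2[of hs "\<lambda>f h. \<forall>xs. length xs = n \<longrightarrow> eval f xs (h xs)"] assms(2)
    unfolding rf_def by auto
  show ?thesis unfolding rf_def
  proof (intro exI[of _ "Comp fg fs"] allI impI)
    fix xs :: "nat list" assume l: "length xs = n"
    have "list_all2 (\<lambda>f y. eval f xs y) fs (map (\<lambda>h. h xs) hs)"
      using fs l by (auto simp: list_all2_map2 elim: list_all2_mono)
    then show "eval (Comp fg fs) xs (g (map (\<lambda>h. h xs) hs))"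
      using fg by (auto intro: eval_Comp)
  qed
qed

primrec precf :: "(nat list \<Rightarrow> nat) \<Rightarrow> (nat list \<Rightarrow> nat) \<Rightarrow> nat \<Rightarrow> nat list \<Rightarrow> nat" where
  "precf g h 0 xs = g xs"
| "precf g h (Suc k) xs = h (k # precf g h k xs # xs)"

lemma rf_prec:
  assumes "rf n g" "rf (Suc (Suc n)) h"
  shows "rf (Suc n) (\<lambda>xs. precf g h (hd xs) (tl xs))"
proof -
  obtain fg where fg: "\<forall>ys. length ys = n \<longrightarrow> eval fg ys (g ys)"
    using assms(1) unfolding rf_def by auto
  obtain fh where fh: "\<forall>ys. length ys = Suc (Suc n) \<longrightarrow> eval fh ys (h ys)"
    using assms(2) unfolding rf_def by auto
  have *: "eval (Prec fg fh) (k # xs) (precf g h k xs)" if "length xs = n" for k xs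
    using that
  proof (induction k)
    case 0 then show ?case using fg by (auto intro: eval_Prec0)
  next
    case (Suc k)
    have "eval fh (k # precf g h k xs # xs) (h (k # precf g h k xs # xs))"
      using fh Suc.prems by auto
    then show ?case using Suc by (auto intro: eval_PrecS)
  qed
  show ?thesis unfolding rf_def
    apply (rule exI[of _ "Prec fg fh"])
    apply clarify
    apply (case_tac xs)
     apply (auto intro: *)
    done
qed

lemma rf_mn:
  assumes "rf (Suc n) f" "\<And>xs. length xs = n \<Longrightarrow> \<exists>y. f (y # xs) = 0"
  shows "rf n (\<lambda>xs. LEAST y. f (y # xs) = 0)"
proof -
  obtain ff where ff: "\<forall>ys. length ys = Suc n \<longrightarrow> eval ff ys (f ys)"
    using assms(1) unfolding rf_def by auto
  show ?thesis unfolding rf_def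
  proof (intro exI[of _ "Mn ff"] allI impI)
    fix xs :: "nat list" assume l: "length xs = n"
    let ?y = "LEAST y. f (y # xs) = 0"
    have "f (?y # xs) = 0" using assms(2)[OF l] by (rule LeastI_ex)
    moreover have "\<forall>z<?y. \<exists>v. v > 0 \<and> eval ff (z # xs) v"
    proof (intro allI impI)
      fix z assume "z < ?y"
      then have "f (z # xs) \<noteq> 0" by (rule not_less_Least)
      moreover have "eval ff (z # xs) (f (z # xs))" using ff l by simp
      ultimately show "\<exists>v. v > 0 \<and> eval ff (z # xs) v" by blast
    qed
    ultimately show "eval (Mn ff) xs ?y"
      using ff l by (metis eval_Mn length_Cons)
  qed
qed



lemma rf_comp1: "rf 1 g \<Longrightarrow> rf n a \<Longrightarrow> rf n (\<lambda>xs. g [a xs])"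
  using rf_comp[of "[a]" g n] by auto

lemma rf_comp2: "rf 2 g \<Longrightarrow> rf n a \<Longrightarrow> rf n b \<Longrightarrow> rf n (\<lambda>xs. g [a xs, b xs])"
  using rf_comp[of "[a,b]" g n] by (auto simp: numeral_2_eq_2)

lemma rf_const: "rf n (\<lambda>_. k)"
proof (induction k)
  case 0 then show ?case by (rule rf_Z)
next
  case (Suc k)
  from rf_comp1[OF rf_S Suc] show ?case by simp
qed

lemma rf_add0: "rf 2 (\<lambda>xs. xs!0 + xs!1)"
proof -
  have P: "rf (Suc 1) (\<lambda>xs. precf (\<lambda>ys. ys!0) (\<lambda>ys. Suc (ys!1)) (hd xs) (tl xs))"
    apply (rule rf_prec)
     apply (rule rf_Proj, simp)
    using rf_comp1[OF rf_S rf_Proj[of 1 "Suc (Suc 1)"]] by simp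
  have Q: "precf (\<lambda>ys. ys!0) (\<lambda>ys. Suc (ys!1)) k ys = k + ys!0" for k ys
    by (induction k) auto
  show ?thesis
    apply (rule rf_cong[OF P[unfolded Suc_1]]) apply (subst Q) by (auto simp: length_Suc_conv numeral_2_eq_2)

qed

lemma rf_pred0: "rf 1 (\<lambda>xs. xs!0 - 1)"
proof -
  have P: "rf (Suc 0) (\<lambda>xs. precf (\<lambda>ys. 0) (\<lambda>ys. ys!0) (hd xs) (tl xs))"
    by (rule rf_prec) (auto intro: rf_Z rf_Proj)
  have Q: "precf (\<lambda>ys. 0) (\<lambda>ys. ys!0) k ys = k - 1" for k ys
    by (induction k) auto
  show ?thesis
    apply (rule rf_cong[OF P[unfolded One_nat_def[symmetric]]]) apply (subst Q) by (auto simp: length_Suc_conv)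

qed

lemma rf_sub0: "rf 2 (\<lambda>xs. xs!1 - xs!0)"
proof -
  have P: "rf (Suc 1) (\<lambda>xs. precf (\<lambda>ys. ys!0) (\<lambda>ys. ys!1 - 1) (hd xs) (tl xs))"
    apply (rule rf_prec)
     apply (rule rf_Proj, simp)
    using rf_comp1[OF rf_pred0 rf_Proj[of 1 "Suc (Suc 1)"]] by simp
  have Q: "precf (\<lambda>ys. ys!0) (\<lambda>ys. ys!1 - 1) k ys = ys!0 - k" for k ys
    by (induction k) auto
  show ?thesis
    apply (rule rf_cong[OF P[unfolded Suc_1]]) apply (subst Q) by (auto simp: length_Suc_conv numeral_2_eq_2)

qed

lemma rf_mult0: "rf 2 (\<lambda>xs. xs!0 * xs!1)"
proof -
  have P: "rf (Suc 1) (\<lambda>xs. precf (\<lambda>ys. 0) (\<lambda>ys. ys!1 + ys!2) (hd xs) (tl xs))"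
    apply (rule rf_prec)
     apply (rule rf_Z)
    using rf_comp2[OF rf_add0 rf_Proj[of 1 "Suc (Suc 1)"] rf_Proj[of 2 "Suc (Suc 1)"]] by simp
  have Q: "precf (\<lambda>ys. 0) (\<lambda>ys. ys!1 + ys!2) k ys = k * ys!0" for k ys
    by (induction k) auto
  show ?thesis
    apply (rule rf_cong[OF P[unfolded Suc_1]]) apply (subst Q) by (auto simp: length_Suc_conv numeral_2_eq_2)

qed

lemma rf_add: "rf n f \<Longrightarrow> rf n g \<Longrightarrow> rf n (\<lambda>xs. f xs + g xs)"
  using rf_comp2[OF rf_add0] by simp
lemma rf_sub: "rf n f \<Longrightarrow> rf n g \<Longrightarrow> rf n (\<lambda>xs. f xs - g xs)"
  using rf_comp2[OF rf_sub0, of n g f] by simp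
lemma rf_mult: "rf n f \<Longrightarrow> rf n g \<Longrightarrow> rf n (\<lambda>xs. f xs * g xs)"
  using rf_comp2[OF rf_mult0] by simp

lemma rf_if_eq:
  assumes "rf n f" "rf n g" "rf n a" "rf n b"
  shows "rf n (\<lambda>xs. if f xs = g xs then a xs else b xs)"
proof -
  let ?e = "\<lambda>xs. 1 - ((f xs - g xs) + (g xs - f xs))"
  have e: "rf n ?e" by (intro rf_sub rf_add rf_const assms)
  have "rf n (\<lambda>xs. a xs * ?e xs + b xs * (1 - ?e xs))"
    by (intro rf_add rf_mult rf_sub rf_const assms e)
  then show ?thesis by (rule rf_cong) auto
qed

lemma rf_args: "rf (Suc (Suc n)) (\<lambda>ys. ys!0)" "\<forall>i<n. rf (Suc (Suc n)) (\<lambda>ys. ys!(i+2))"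
  by (auto intro: rf_Proj)

lemma rf_shift2:
  assumes "rf (Suc n) f"
  shows "rf (Suc (Suc n)) (\<lambda>ys. f (ys!0 # drop 2 ys))"
proof -
  let ?hs = "map (\<lambda>i ys. ys!i) (0 # [2..<n+2])"
  have P: "rf (Suc (Suc n)) (\<lambda>ys. f (map (\<lambda>h. h ys) ?hs))"
    by (rule rf_comp) (use assms in \<open>auto intro: rf_Proj simp del: upt_Suc\<close>)
  have Q: "map (\<lambda>h. h ys) ?hs = ys!0 # drop 2 ys" if "length ys = Suc (Suc n)" for ys
    using that by (auto simp: list_eq_iff_nth_eq nth_Cons simp del: upt_Suc split: nat.splits)
  show ?thesis by (rule rf_cong[OF P]) (rule arg_cong[where f=f], rule Q)
qed

lemma rf_bsum:
  assumes "rf (Suc n) f"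
  shows "rf (Suc n) (\<lambda>xs. \<Sum>i<hd xs. f (i # tl xs))"
proof -
  have P: "rf (Suc n) (\<lambda>xs. precf (\<lambda>ys. 0) (\<lambda>ys. ys!1 + f (ys!0 # drop 2 ys)) (hd xs) (tl xs))"
    apply (rule rf_prec[OF rf_Z])
    by (intro rf_add rf_Proj rf_shift2 assms) simp
  have Q: "precf (\<lambda>ys. 0) (\<lambda>ys. ys!1 + f (ys!0 # drop 2 ys)) k ys = (\<Sum>i<k. f (i # ys))" for k ys
    by (induction k) auto
  show ?thesis apply (rule rf_cong[OF P]) apply (subst Q) by (auto simp: length_Suc_conv)
qed

lemma rf_iter:
  assumes "rf 1 (\<lambda>xs. t (xs!0))"
  shows "rf 2 (\<lambda>xs. (t ^^ (xs!0)) (xs!1))"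
proof -
  have P: "rf (Suc 1) (\<lambda>xs. precf (\<lambda>ys. ys!0) (\<lambda>ys. t (ys!1)) (hd xs) (tl xs))"
    apply (rule rf_prec)
     apply (rule rf_Proj, simp)
    using rf_comp1[OF assms rf_Proj[of 1 "Suc (Suc 1)"]] by simp
  have Q: "precf (\<lambda>ys. ys!0) (\<lambda>ys. t (ys!1)) k ys = (t ^^ k) (ys!0)" for k ys
    by (induction k) auto
  show ?thesis
    apply (rule rf_cong[OF P[unfolded Suc_1]]) apply (subst Q) by (auto simp: length_Suc_conv numeral_2_eq_2)

qed



definition tailc :: "nat \<Rightarrow> nat" where "tailc c = (c - 1) div 2"

lemma rf_tailc: "rf 1 (\<lambda>xs. tailc (xs!0))"
proof -
  have P: "rf (Suc 0) (\<lambda>xs. LEAST y. (y # xs)!1 - (2 * (y # xs)!0 + 2) = 0)"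
    apply (rule rf_mn)
     apply (intro rf_sub rf_add rf_mult rf_const rf_Proj; simp)
    apply (rule_tac x="xs!0" in exI) by simp
  have Q: "(LEAST y. c \<le> Suc (Suc (2 * y))) = tailc c" for c
    unfolding tailc_def by (rule Least_equality) auto
  show ?thesis by (rule rf_cong[OF P[unfolded One_nat_def[symmetric]]]) (simp add: Q)
qed

lemma tailc_code [simp]: "tailc (code_str (b # bs)) = code_str bs"
  unfolding tailc_def by auto

lemma tailc_0 [simp]: "tailc 0 = 0" unfolding tailc_def by simp

lemma code_Nil_iff [simp]: "code_str s = 0 \<longleftrightarrow> s = []"
  by (cases s) auto

lemma iter_tailc: "(tailc ^^ i) (code_str s) = code_str (drop i s)"
proof (induction i arbitrary: s)
  case 0 then show ?case by simp
next
  case (Suc i)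
  show ?case
  proof (cases s)
    case Nil
    then show ?thesis by (simp add: funpow_Suc_right del: funpow.simps)
      (metis code_str.simps(1) Suc.IH drop_Nil)
  next
    case (Cons b bs)
    have "(tailc ^^ Suc i) (code_str (b#bs)) = (tailc^^i) (tailc (code_str (b#bs)))"
      by (simp only: funpow_Suc_right comp_def)
    also have "\<dots> = (tailc^^i) (code_str bs)" by (simp only: tailc_code)
    finally show ?thesis using Suc.IH[of bs] Cons by simp
  qed
qed

lemma code_mod2: "code_str (b # bs) mod 2 = (if b then 0 else 1)"
  by auto

lemma code_append: "code_str (s @ t) = code_str s + 2 ^ length s * code_str t"
  by (induction s) auto

lemma code_inj: "code_str s = code_str t \<Longrightarrow> s = t"
proof (induction s arbitrary: t)
  case Nil then show ?case by (cases t) (auto split: if_splits)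
next
  case (Cons b bs)
  then obtain c cs where t: "t = c # cs" by (cases t) (auto split: if_splits)
  with Cons.prems have "b = c"
    by (metis code_mod2 zero_neq_one)
  with Cons t show ?case by auto
qed

lemma code_surj: "\<exists>s. code_str s = n"
proof (induction n rule: less_induct)
  case (less n)
  show ?case
  proof (cases "n = 0")
    case True then show ?thesis by (intro exI[of _ "[]"]) simp
  next
    case False
    then have "tailc n < n" unfolding tailc_def by auto
    then obtain s where s: "code_str s = tailc n" using less by auto
    show ?thesis
    proof (cases "even n")
      case True
      then show ?thesis using False s
        by (intro exI[of _ "True # s"]) (auto simp: tailc_def elim!: evenE)
    next
      case False
      then show ?thesis using s
        by (intro exI[of _ "False # s"]) (auto simp: tailc_def elim!: oddE)
    qed
  qed
qed

lemma length_le_code: "length s \<le> code_str s"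
  by (induction s) auto

lemma rf2_computable2: "rf 2 (\<lambda>xs. h (xs!0) (xs!1)) \<Longrightarrow> computable2 h"
  unfolding rf_def computable2_def
  by (metis (no_types, lifting) length_Cons list.size(3) nth_Cons_0 nth_Cons_Suc numeral_2_eq_2 One_nat_def)

lemma computable2_rf: "computable2 h \<Longrightarrow> rf 2 (\<lambda>xs. h (xs!0) (xs!1))"
  unfolding rf_def computable2_def
  apply (erule exE) subgoal for f apply (rule exI[of _ f])
  by (auto simp: length_Suc_conv numeral_2_eq_2) done

lemma computable1_rf: "computable1 h \<longleftrightarrow> rf 1 (\<lambda>xs. h (xs!0))"
  unfolding rf_def computable1_def
proof
  assume "\<exists>f. \<forall>n. eval f [n] (h n)"
  then obtain f where "\<forall>n. eval f [n] (h n)" by auto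
  then show "\<exists>f. \<forall>xs. length xs = 1 \<longrightarrow> eval f xs (h (xs ! 0))"
    by (intro exI[of _ f]) (auto simp: length_Suc_conv)
next
  assume "\<exists>f. \<forall>xs. length xs = 1 \<longrightarrow> eval f xs (h (xs ! 0))"
  then obtain f where f: "\<forall>xs. length xs = 1 \<longrightarrow> eval f xs (h (xs ! 0))" by auto
  show "\<exists>f. \<forall>n. eval f [n] (h n)"
    by (intro exI[of _ f] allI) (use f[rule_format, of "[n]" for n] in simp)
qed



lemma rf_tailc': "rf n f \<Longrightarrow> rf n (\<lambda>xs. tailc (f xs))"
  using rf_comp1[OF rf_tailc] by simp

lemma rf_iter': "rf n f \<Longrightarrow> rf n g \<Longrightarrow> rf n (\<lambda>xs. (tailc ^^ f xs) (g xs))"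
  using rf_comp2[OF rf_iter[OF rf_tailc]] by simp

lemma rf_mod2': "rf n f \<Longrightarrow> rf n (\<lambda>xs. f xs mod 2)"
proof -
  assume f: "rf n f"
  have "rf n (\<lambda>xs. f xs - 2 * tailc (f xs + 1))"
    by (intro rf_sub rf_mult rf_tailc' rf_add rf_const f)
  moreover have "x - 2 * tailc (x + 1) = x mod 2" for x :: nat
    unfolding tailc_def by (simp add: minus_mod_eq_mult_div[symmetric])
  ultimately show ?thesis by simp
qed

definition xb :: "(nat \<Rightarrow> bool) \<Rightarrow> nat \<Rightarrow> nat" where "xb X n = (if X n then 1 else 0)"

definition bad :: "(nat \<Rightarrow> bool) \<Rightarrow> nat \<Rightarrow> nat \<Rightarrow> nat" where
  "bad X i c = (if (tailc^^i) c = 0 then 0 else if (tailc^^i) c mod 2 = 1 - xb X i then 0 else 1)"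

definition matchc :: "(nat \<Rightarrow> bool) \<Rightarrow> nat \<Rightarrow> nat" where
  "matchc X c = (if (\<Sum>i<c. bad X i c) = 0 then 1 else 0)"

lemma rf_xb: "computable_seq X \<Longrightarrow> rf n f \<Longrightarrow> rf n (\<lambda>xs. xb X (f xs))"
  unfolding computable_seq_def computable1_rf xb_def
  using rf_comp1 by fastforce

lemma rf_bad: "computable_seq X \<Longrightarrow> rf 2 (\<lambda>xs. bad X (xs!0) (xs!1))"
  unfolding bad_def
  by (intro rf_if_eq rf_iter' rf_Proj rf_const rf_mod2' rf_sub rf_xb; simp)

lemma rf_match: "computable_seq X \<Longrightarrow> rf 1 (\<lambda>xs. matchc X (xs!0))"
proof -
  assume X: "computable_seq X"
  have "rf (Suc 1) (\<lambda>xs. \<Sum>i<hd xs. bad X ((i # tl xs)!0) ((i # tl xs)!1))"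
    by (rule rf_bsum) (use rf_bad[OF X] in \<open>simp add: numeral_2_eq_2\<close>)
  note P = this
  have "rf 2 (\<lambda>xs. \<Sum>i<xs!0. bad X i (xs!1))"
    by (rule rf_cong[OF P[unfolded Suc_1]]) (auto simp: length_Suc_conv numeral_2_eq_2)
  from rf_comp2[OF this rf_Proj[of 0 1] rf_Proj[of 0 1]]
  have "rf 1 (\<lambda>xs. \<Sum>i<xs!0. bad X i (xs!0))" by simp
  then show ?thesis unfolding matchc_def
    by (intro rf_if_eq rf_const)
qed

lemma bad_code: "bad X i (code_str s) = 0 \<longleftrightarrow> (i < length s \<longrightarrow> (s!i \<longleftrightarrow> X i))"
proof (cases "i < length s")
  case True
  then have "drop i s = s!i # drop (Suc i) s" by (simp add: Cons_nth_drop_Suc)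
  then have "(tailc^^i) (code_str s) = code_str (s!i # drop (Suc i) s)"
    by (simp add: iter_tailc)
  then show ?thesis using True unfolding bad_def xb_def
    by (simp only: code_mod2) auto
next
  case False
  then show ?thesis unfolding bad_def by (simp add: iter_tailc)
qed

lemma matchc_code: "matchc X (code_str s) = (if s = restr X (length s) then 1 else 0)"
proof (cases "s = restr X (length s)")
  case True
  then have "s!i = X i" if "i < length s" for i
    using that unfolding restr_def by (metis add_0 diff_zero length_map nth_map nth_upt)
  then have "bad X i (code_str s) = 0" for i
    using bad_code[of X i s] by blast
  then show ?thesis using True unfolding matchc_def by simp
next
  case False
  have "\<exists>i<length s. s!i \<noteq> X i"
  proof (rule ccontr)
    assume "\<not> ?thesis"
    then have "s = restr X (length s)" unfolding restr_def
      by (intro nth_equalityI) auto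
    with False show False by blast
  qed
  then obtain i where i: "i < length s" "s!i \<noteq> X i" by blast
  then have b: "bad X i (code_str s) \<noteq> 0" using bad_code[of X i s] by blast
  have "i < code_str s" using i length_le_code[of s] by linarith
  then have "(\<Sum>i<code_str s. bad X i (code_str s)) \<noteq> 0"
    using b by (simp add: sum_eq_0_iff) blast
  then show ?thesis using False unfolding matchc_def by simp
qed



lemma finite_level: "finite {\<tau>::bool list. length \<tau> = n \<and> P \<tau>}"
  by (rule finite_subset[OF _ finite_lists_length_eq[of "UNIV :: bool set" n]]) auto

lemma restr_Suc: "restr X (Suc n) = restr X n @ [X n]"
  unfolding restr_def by simp

lemma length_restr [simp]: "length (restr X n) = n"
  unfolding restr_def by simp

lemma take_restr: "m \<le> n \<Longrightarrow> take m (restr X n) = restr X m"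
  unfolding restr_def by (simp add: take_map)

lemma forward:
  assumes X: "computable_seq X"
  shows "\<exists>\<rho>. semimeasure \<rho> \<and> left_ce \<rho> \<and>
       (\<exists>c>0. (\<lambda>n. rho_bar \<rho> (restr X n)) \<longlonglongrightarrow> c)"
proof -
  define \<rho> :: "bool list \<Rightarrow> real" where "\<rho> \<sigma> = (if \<sigma> = restr X (length \<sigma>) then 1 else 0)" for \<sigma>
  have sm: "semimeasure \<rho>"
    unfolding semimeasure_def
  proof (intro conjI allI)
    fix \<sigma> :: "bool list"
    have "\<sigma> @ [b] = restr X (length (\<sigma> @ [b])) \<longleftrightarrow> \<sigma> = restr X (length \<sigma>) \<and> b = X (length \<sigma>)" for b
      by (auto simp: restr_Suc)
    then show "\<rho> (\<sigma> @ [False]) + \<rho> (\<sigma> @ [True]) \<le> \<rho> \<sigma>"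
      unfolding \<rho>_def by (cases "X (length \<sigma>)") auto
  qed (auto simp: \<rho>_def restr_def)
  have lce: "left_ce \<rho>"
    unfolding left_ce_def
  proof (intro exI conjI allI)
    show "computable2 (\<lambda>c s. matchc X c)"
      by (rule rf2_computable2) (use rf_comp1[OF rf_match[OF X] rf_Proj[of 0 2]] in simp)
    show "computable2 (\<lambda>c s. 0)"
      by (rule rf2_computable2) (simp add: rf_const)
    fix \<sigma>
    have "(\<lambda>s. real (matchc X (code_str \<sigma>)) / real (0 + 1)) = (\<lambda>s. \<rho> \<sigma>)"
      by (simp add: matchc_code \<rho>_def)
    note eq = this
    show "let q = \<lambda>s. real (matchc X (code_str \<sigma>)) / real (0 + 1) in mono q \<and> q \<longlonglongrightarrow> \<rho> \<sigma>"
      unfolding Let_def eq by (simp add: mono_def)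
  qed
  have rb: "rho_bar \<rho> (restr X n) = 1" for n
  proof -
    have "(\<Sum>\<tau>\<in>{\<tau>. length \<tau> = k \<and> take n \<tau> = restr X n}. \<rho> \<tau>) = 1" if k: "k \<ge> n" for k
    proof -
      have "(\<Sum>\<tau>\<in>{\<tau>. length \<tau> = k \<and> take n \<tau> = restr X n}. \<rho> \<tau>) =
            (\<Sum>\<tau>\<in>{\<tau>. length \<tau> = k \<and> take n \<tau> = restr X n}. if restr X k = \<tau> then 1 else 0)"
        by (rule sum.cong) (auto simp: \<rho>_def)
      also have "\<dots> = 1"
        using finite_level[of k "\<lambda>\<tau>. take n \<tau> = restr X n"] k by (simp add: take_restr)
      finally show ?thesis .
    qed
    then show ?thesis unfolding rho_bar_def
      by (simp add: cINF_const)
  qed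
  show ?thesis
    by (intro exI[of _ \<rho>] conjI sm lce exI[of _ "1::real"]) (simp_all add: rb)
qed



lemma rf_comp3: "rf 3 g \<Longrightarrow> rf n a \<Longrightarrow> rf n b \<Longrightarrow> rf n c \<Longrightarrow> rf n (\<lambda>xs. g [a xs, b xs, c xs])"
  using rf_comp[of "[a,b,c]" g n] by (auto simp: numeral_3_eq_3)

lemma rf_sumSuc:
  assumes "rf 3 (\<lambda>ys. h (ys!0) (ys!1) (ys!2))"
  shows "rf 2 (\<lambda>xs. \<Sum>t<Suc (xs!0). h t (xs!0) (xs!1))"
proof -
  have P: "rf (Suc (Suc (Suc 0))) (\<lambda>xs. \<Sum>i<hd xs. h ((i # tl xs)!0) ((i # tl xs)!1) ((i # tl xs)!2))"
    by (rule rf_bsum) (use assms in \<open>simp add: numeral_3_eq_3\<close>)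
  have Q0: "rf (Suc (Suc (Suc 0))) (\<lambda>xs. \<Sum>i<xs!0. h i (xs!1) (xs!2))"
    by (rule rf_cong[OF P]) (auto simp: length_Suc_conv numeral_3_eq_3)
  note Q = Q0[unfolded numeral_3_eq_3[symmetric]]
  from rf_comp3[OF Q rf_add[OF rf_Proj[of 0 2] rf_const[of 2 1]] rf_Proj[of 0 2] rf_Proj[of 1 2]]
  show ?thesis by simp
qed

lemma rf_num: "computable2 num \<Longrightarrow> rf n f \<Longrightarrow> rf n g \<Longrightarrow> rf n (\<lambda>xs. num (f xs) (g xs))"
  using rf_comp2[OF computable2_rf] by simp

definition FF :: "nat \<Rightarrow> nat \<Rightarrow> nat" where "FF i t = (tailc ^^ i) t"

definition ci :: "(nat \<Rightarrow> nat \<Rightarrow> nat) \<Rightarrow> (nat \<Rightarrow> nat \<Rightarrow> nat) \<Rightarrow> nat \<Rightarrow> nat \<Rightarrow> nat \<Rightarrow> nat \<Rightarrow> nat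
   \<Rightarrow> nat \<Rightarrow> nat \<Rightarrow> nat \<Rightarrow> nat" where
  "ci num den a b cs N m t p j =
   (if FF (j+1+m) t = 0 then
     (if FF (j+m) t = 0 then 0 else
       (if t = cs + 2^N * FF N t then
          (if b * num t p - a * (den t p + 1) = 0 then 0 else 1)
        else 0))
    else 0)"

lemma ci_eq: "ci num den a b cs N m t p j =
  (if FF (j+1+m) t = 0 \<and> FF (j+m) t \<noteq> 0 \<and> t = cs + 2^N * FF N t \<and> a*(den t p + 1) < b*num t p
   then 1 else 0)"
  unfolding ci_def by auto

lemma rf_ci:
  assumes "computable2 num" "computable2 den"
  shows "rf 3 (\<lambda>ys. ci num den a b cs N m (ys!0) (ys!1) (ys!2))"
  unfolding ci_def FF_def
  by (intro rf_if_eq rf_iter' rf_add rf_mult rf_sub rf_num[OF assms(1)] rf_num[OF assms(2)]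
      rf_Proj rf_const; simp)

definition cnt where "cnt num den a b cs N m p j = (\<Sum>t<Suc p. ci num den a b cs N m t p j)"

definition pstar where "pstar num den a b cs N m j =
   (LEAST p. (if cnt num den a b cs N m p j = 0 then 1 else 0) = (0::nat))"

definition outf where "outf num den a b cs N m j =
   (\<Sum>t<Suc (pstar num den a b cs N m j). ci num den a b cs N m t (pstar num den a b cs N m j) j *
      (if FF j t mod 2 = 0 then 1 else 0))"

lemma rf_outf:
  assumes "computable2 num" "computable2 den"
    and ex: "\<And>j. \<exists>p. cnt num den a b cs N m p j \<noteq> 0"
  shows "rf 1 (\<lambda>xs. outf num den a b cs N m (xs!0))"
proof -
  have C: "rf 2 (\<lambda>xs. cnt num den a b cs N m (xs!0) (xs!1))"
    unfolding cnt_def by (rule rf_sumSuc[OF rf_ci[OF assms(1,2)]])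
  have P: "rf (Suc 0) (\<lambda>xs. LEAST p. (if cnt num den a b cs N m ((p # xs)!0) ((p#xs)!1) = 0 then 1 else 0) = (0::nat))"
    apply (rule rf_mn)
     apply (rule rf_if_eq[OF C[unfolded numeral_2_eq_2] rf_const rf_const rf_const])
    using ex by (auto simp: length_Suc_conv)
  have PS: "rf 1 (\<lambda>xs. pstar num den a b cs N m (xs!0))"
    by (rule rf_cong[OF P[unfolded One_nat_def[symmetric]]]) (simp add: pstar_def)
  have G: "rf 3 (\<lambda>ys. ci num den a b cs N m (ys!0) (ys!1) (ys!2) * (if FF (ys!2) (ys!0) mod 2 = 0 then 1 else 0))"
    unfolding FF_def
    by (intro rf_mult rf_ci assms rf_if_eq rf_mod2' rf_iter' rf_Proj rf_const; simp)
  from rf_comp2[OF rf_sumSuc[OF G] PS rf_Proj[of 0 1]]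
  show ?thesis by (simp add: outf_def)
qed


lemma frac_cmp:
  assumes "b > 0"
  shows "real a / real b < real n / real (d + 1) \<longleftrightarrow> a * (d + 1) < b * n"
proof -
  have "real a / real b < real n / real (d + 1) \<longleftrightarrow> real a * real (d+1) < real n * real b"
    using assms by (simp add: frac_less_eq field_simps)
  also have "\<dots> \<longleftrightarrow> a * (d + 1) < b * n"
    by (metis of_nat_less_iff of_nat_mult mult.commute)
  finally show ?thesis .
qed

lemma code_take_drop:
  assumes "N \<le> length t"
  shows "code_str t = code_str (take N t) + 2 ^ N * code_str (drop N t)"
  using code_append[of "take N t" "drop N t"] assms by simp

lemma drop_Nil_iff: "drop i t = [] \<longleftrightarrow> length t \<le> i" by simp

lemma ci_code:
  assumes "b > 0" and True: "length sg \<le> m"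
  shows "ci num den a b (code_str sg) (length sg) m (code_str t) p j =
    (if length t = j + 1 + m \<and> take (length sg) t = sg \<and>
        real a / real b < real (num (code_str t) p) / real (den (code_str t) p + 1) then 1 else 0)"
proof -
  have A: "(FF (j+1+m) (code_str t) = 0 \<and> FF (j+m) (code_str t) \<noteq> 0) \<longleftrightarrow> length t = j + 1 + m"
    unfolding FF_def iter_tailc by auto
  have B: "length t = j + 1 + m \<Longrightarrow>
     (code_str t = code_str sg + 2 ^ length sg * FF (length sg) (code_str t)) \<longleftrightarrow> take (length sg) t = sg"
  proof -
    assume l: "length t = j + 1 + m"
    then have "length sg \<le> length t" using True by simp
    then show ?thesis unfolding FF_def iter_tailc
      using code_take_drop[of "length sg" t] code_inj by auto
  qed
  show ?thesis unfolding ci_eq using A B True frac_cmp[OF assms(1)] by auto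
qed



lemma rho_bar_le:
  assumes "\<And>\<tau>. \<rho> \<tau> \<ge> 0"
  shows "rho_bar \<rho> \<sigma> \<le> \<rho> \<sigma>"
proof -
  have bdd: "bdd_below ((\<lambda>n. \<Sum>\<tau>\<in>{\<tau>. length \<tau> = n \<and> take (length \<sigma>) \<tau> = \<sigma>}. \<rho> \<tau>) ` {length \<sigma>..})"
    by (rule bdd_belowI[of _ 0]) (auto intro: sum_nonneg assms)
  have "{\<tau>. length \<tau> = length \<sigma> \<and> take (length \<sigma>) \<tau> = \<sigma>} = {\<sigma>}" by auto
  then show ?thesis unfolding rho_bar_def
    using cINF_lower[OF bdd, of "length \<sigma>"] by simp
qed

lemma level_Suc:
  assumes "N \<le> k"
  shows "{\<tau>::bool list. length \<tau> = Suc k \<and> take N \<tau> = s} =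
     (\<lambda>\<tau>. \<tau> @ [False]) ` {\<tau>. length \<tau> = k \<and> take N \<tau> = s} \<union>
     (\<lambda>\<tau>. \<tau> @ [True]) ` {\<tau>. length \<tau> = k \<and> take N \<tau> = s}"
proof (intro equalityI subsetI)
  fix t assume "t \<in> {\<tau>::bool list. length \<tau> = Suc k \<and> take N \<tau> = s}"
  then have t: "length t = Suc k" "take N t = s" by auto
  then have e: "t = butlast t @ [last t]"
    by (metis append_butlast_last_id list.size(3) nat.distinct(1))
  have "take N (butlast t) = s" using t assms
    by (metis e butlast_snoc length_butlast diff_Suc_1 take_butlast le_imp_less_Suc)
  moreover have "length (butlast t) = k" using t by simp
  ultimately show "t \<in> (\<lambda>\<tau>. \<tau> @ [False]) ` {\<tau>. length \<tau> = k \<and> take N \<tau> = s} \<union>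
     (\<lambda>\<tau>. \<tau> @ [True]) ` {\<tau>. length \<tau> = k \<and> take N \<tau> = s}"
    using e by (cases "last t") (auto intro!: image_eqI[where x="butlast t"])
qed (use assms in auto)

lemma sum_level_Suc:
  assumes sm: "semimeasure \<rho>" and "N \<le> k"
  shows "(\<Sum>\<tau>\<in>{\<tau>. length \<tau> = Suc k \<and> take N \<tau> = s}. \<rho> \<tau>) \<le> (\<Sum>\<tau>\<in>{\<tau>. length \<tau> = k \<and> take N \<tau> = s}. \<rho> \<tau>)"
proof -
  let ?L = "{\<tau>::bool list. length \<tau> = k \<and> take N \<tau> = s}"
  have fin: "finite ?L" using finite_level[of k "\<lambda>\<tau>. take N \<tau> = s"] by simp
  have inj: "inj_on (\<lambda>\<tau>. \<tau> @ [b]) A" for b and A :: "bool list set" by (auto intro: inj_onI)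
  have disj: "(\<lambda>\<tau>. \<tau> @ [False]) ` ?L \<inter> (\<lambda>\<tau>. \<tau> @ [True]) ` ?L = {}" by auto
  have "(\<Sum>\<tau>\<in>{\<tau>. length \<tau> = Suc k \<and> take N \<tau> = s}. \<rho> \<tau>) =
        (\<Sum>\<tau>\<in>(\<lambda>\<tau>. \<tau> @ [False]) ` ?L. \<rho> \<tau>) + (\<Sum>\<tau>\<in>(\<lambda>\<tau>. \<tau> @ [True]) ` ?L. \<rho> \<tau>)"
    unfolding level_Suc[OF assms(2)] using fin disj by (intro sum.union_disjoint) auto
  also have "\<dots> = (\<Sum>\<tau>\<in>?L. \<rho> (\<tau> @ [False]) + \<rho> (\<tau> @ [True]))"
    by (simp add: sum.reindex[OF inj] sum.distrib)
  also have "\<dots> \<le> (\<Sum>\<tau>\<in>?L. \<rho> \<tau>)"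
    using sm unfolding semimeasure_def by (intro sum_mono) auto
  finally show ?thesis .
qed



lemma backward:
  assumes sm: "semimeasure \<rho>" and lce: "left_ce \<rho>" and c: "c > 0"
    and lim: "(\<lambda>n. rho_bar \<rho> (restr X n)) \<longlonglongrightarrow> c"
  shows "computable_seq X"
proof -
  obtain num den where cn: "computable2 num" and cd: "computable2 den" and
    H: "\<And>\<sigma>. mono (\<lambda>s. real (num (code_str \<sigma>) s) / real (den (code_str \<sigma>) s + 1)) \<and>
          (\<lambda>s. real (num (code_str \<sigma>) s) / real (den (code_str \<sigma>) s + 1)) \<longlonglongrightarrow> \<rho> \<sigma>"
    using lce unfolding left_ce_def Let_def by blast
  define Q where "Q \<sigma> s = real (num (code_str \<sigma>) s) / real (den (code_str \<sigma>) s + 1)" for \<sigma> s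
  have monoQ: "mono (Q \<sigma>)" and limQ: "Q \<sigma> \<longlonglongrightarrow> \<rho> \<sigma>" for \<sigma>
    using H[of \<sigma>] unfolding Q_def by auto
  have Qle: "Q \<sigma> s \<le> \<rho> \<sigma>" for \<sigma> s
    by (rule incseq_le[OF monoQ limQ])
  have nonneg: "\<And>\<tau>. \<rho> \<tau> \<ge> 0" using sm unfolding semimeasure_def by auto
  obtain r where r: "r \<in> \<rat>" "c / 2 < r" "r < c"
    using Rats_dense_in_real[of "c/2" c] c by auto
  then have rpos: "r > 0" using c by linarith
  obtain a b :: nat where b: "b \<noteq> 0" and ab: "\<bar>r\<bar> = real a / real b"
    using Rats_abs_nat_div_natE[OF r(1)] by metis
  define q where "q = real a / real b"
  have qr: "q = r" using ab rpos unfolding q_def by simp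
  have "eventually (\<lambda>n. q < rho_bar \<rho> (restr X n)) sequentially"
    using order_tendstoD(1)[OF lim] qr r by auto
  moreover have "eventually (\<lambda>n. rho_bar \<rho> (restr X n) < 2 * q) sequentially"
    using order_tendstoD(2)[OF lim] qr r by auto
  ultimately obtain N where N: "\<And>n. n \<ge> N \<Longrightarrow> q < rho_bar \<rho> (restr X n) \<and> rho_bar \<rho> (restr X n) < 2 * q"
    unfolding eventually_sequentially by (metis (full_types) eventually_conj eventually_sequentially)
  define L where "L k = {\<tau>::bool list. length \<tau> = k \<and> take N \<tau> = restr X N}" for k
  define S where "S k = (\<Sum>\<tau>\<in>L k. \<rho> \<tau>)" for k
  have finL: "finite (L k)" for k unfolding L_def by (rule finite_level)
  have "rho_bar \<rho> (restr X N) = (INF k\<in>{N..}. S k)"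
    unfolding rho_bar_def S_def L_def by simp
  moreover have "rho_bar \<rho> (restr X N) < 2 * q" using N by auto
  moreover have "bdd_below (S ` {N..})"
    unfolding S_def by (rule bdd_belowI[of _ 0]) (auto intro: sum_nonneg nonneg)
  ultimately obtain m where m: "m \<ge> N" "S m < 2 * q"
    using cINF_less_iff[of "{N..}" S "2*q"] by auto
  have Sstep: "S (Suc k) \<le> S k" if "N \<le> k" for k
    unfolding S_def L_def by (rule sum_level_Suc[OF sm that])
  have Smono: "S k \<le> S m" if "m \<le> k" for k
    using that
  proof (induction k rule: dec_induct)
    case base then show ?case by simp
  next
    case (step n) then show ?case using Sstep[of n] m(1) by linarith
  qed
  have Xgood: "q < \<rho> (restr X k)" if "k \<ge> N" for k
    using N[OF that] rho_bar_le[of \<rho> "restr X k", OF nonneg] by linarith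
  have XL: "restr X k \<in> L k" if "k \<ge> N" for k
    unfolding L_def using that by (simp add: take_restr)
  have uniq: "\<tau> = restr X k" if "k \<ge> m" "\<tau> \<in> L k" "q < \<rho> \<tau>" for k \<tau>
  proof (rule ccontr)
    assume ne: "\<tau> \<noteq> restr X k"
    have "\<rho> \<tau> + \<rho> (restr X k) = (\<Sum>t\<in>{\<tau>, restr X k}. \<rho> t)" using ne by simp
    also have "\<dots> \<le> S k" unfolding S_def
      by (rule sum_mono2[OF finL]) (use that XL m in \<open>auto intro: nonneg\<close>)
    also have "\<dots> \<le> S m" using Smono that by simp
    finally show False using m Xgood[of k] that by linarith
  qed
  define s0 where "s0 = restr X N"
  have ls0: "length s0 = N" unfolding s0_def by simp
  have bpos: "b > 0" using b by simp
  define ci' where "ci' = ci num den a b (code_str s0) N m"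
  have cicode: "ci' (code_str t) p j = (if t \<in> L (j+1+m) \<and> q < Q t p then 1 else 0)" for t p j
    unfolding ci'_def using ci_code[where sg=s0 and m=m and num=num and den=den and t=t and p=p and j=j and a=a and b=b, OF bpos] ls0 m(1)
    unfolding L_def Q_def q_def s0_def by auto
  have ex: "\<exists>p. cnt num den a b (code_str s0) N m p j \<noteq> 0" for j
  proof -
    let ?M = "j+1+m"
    have "q < \<rho> (restr X ?M)" using Xgood m by simp
    then have "eventually (\<lambda>s. q < Q (restr X ?M) s) sequentially"
      using order_tendstoD(1)[OF limQ] by blast
    then obtain s where s: "q < Q (restr X ?M) s" unfolding eventually_sequentially by blast
    define p where "p = max s (code_str (restr X ?M))"
    have "Q (restr X ?M) s \<le> Q (restr X ?M) p" using monoQ unfolding p_def mono_def by simp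
    then have "ci' (code_str (restr X ?M)) p j = 1"
      using cicode s XL[of ?M] m by auto
    moreover have "code_str (restr X ?M) < Suc p" unfolding p_def by simp
    ultimately have "(\<Sum>t<Suc p. ci' t p j) \<noteq> 0"
      by (metis finite_lessThan lessThan_iff one_neq_zero sum_eq_0_iff)
    then show ?thesis unfolding cnt_def ci'_def by blast
  qed
  have outX: "outf num den a b (code_str s0) N m j = (if X j then 1 else 0)" for j
  proof -
    let ?M = "j+1+m"
    let ?t0 = "code_str (restr X ?M)"
    define P where "P = pstar num den a b (code_str s0) N m j"
    have "(if cnt num den a b (code_str s0) N m P j = 0 then 1 else 0) = (0::nat)"
      unfolding P_def pstar_def by (rule LeastI_ex) (use ex[of j] in auto)
    then have cntP: "(\<Sum>t<Suc P. ci' t P j) \<noteq> 0" unfolding cnt_def ci'_def by (auto split: if_splits)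
    have only: "t = ?t0" if "ci' t P j \<noteq> 0" for t
    proof -
      obtain \<tau> where tau: "code_str \<tau> = t" using code_surj by blast
      have "\<tau> \<in> L ?M" "q < Q \<tau> P" using that cicode[of \<tau> P j] tau by (auto split: if_splits)
      then have "\<tau> = restr X ?M" using uniq[of ?M \<tau>] Qle[of \<tau> P] by auto
      then show ?thesis using tau by simp
    qed
    have ci01: "ci' t P j = 0 \<or> ci' t P j = 1" for t
      unfolding ci'_def ci_def by auto
    have "\<exists>t\<in>{..<Suc P}. ci' t P j \<noteq> 0"
    proof (rule ccontr)
      assume "\<not> ?thesis"
      then have "\<forall>t\<in>{..<Suc P}. ci' t P j = 0" by blast
      then have "(\<Sum>t<Suc P. ci' t P j) = 0" by (rule sum.neutral)
      then show False using cntP by blast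
    qed
    then obtain t where t: "t < Suc P" "ci' t P j \<noteq> 0" by auto
    then have t0: "?t0 < Suc P" "ci' ?t0 P j = 1" using only[of t] ci01[of t] by auto
    define bitf where "bitf t = (if FF j t mod 2 = 0 then 1 else (0::nat))" for t
    have "outf num den a b (code_str s0) N m j = (\<Sum>t<Suc P. ci' t P j * bitf t)"
      unfolding outf_def P_def ci'_def bitf_def by simp
    also have "\<dots> = (\<Sum>t<Suc P. if t = ?t0 then bitf ?t0 else 0)"
      by (rule sum.cong) (use only t0 in auto)
    also have "\<dots> = bitf ?t0" using t0 by simp
    also have "\<dots> = (if X j then 1 else 0)"
    proof -
      have jl: "j < length (restr X ?M)" by simp
      have "restr X ?M ! j = X j" unfolding restr_def
        by (metis add_0 jl length_restr nth_map nth_upt restr_def length_map)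
      then have "drop j (restr X ?M) = X j # drop (Suc j) (restr X ?M)"
        using Cons_nth_drop_Suc[OF jl] by simp
      then show ?thesis unfolding bitf_def FF_def iter_tailc
        by (simp only: code_mod2) auto
    qed
    finally show ?thesis .
  qed
  have "rf 1 (\<lambda>xs. outf num den a b (code_str s0) N m (xs!0))"
    by (rule rf_outf[OF cn cd ex])
  then have "rf 1 (\<lambda>xs. if X (xs!0) then 1 else 0)"
    by (rule rf_cong) (simp add: outX)
  then show ?thesis unfolding computable_seq_def computable1_rf .
qed


theorem proposition6p9:
  fixes X :: "nat \<Rightarrow> bool"
  shows "computable_seq X \<longleftrightarrow>
    (\<exists>\<rho>. semimeasure \<rho> \<and> left_ce \<rho> \<and>
       (\<exists>c>0. (\<lambda>n. rho_bar \<rho> (restr X n)) \<longlonglongrightarrow> c))"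
  using forward backward by blast

end
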